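(* Let $\hat B$ be the bus susceptance matrix of a connected power network with bus set $\mathcal N$, let $\mathcal T \subseteq \mathcal N$, and let $t_1 \neq t_2$ be elements of $\mathcal T$. Let $\sigma_\Gamma^2 > 0$. For $i = 1,2$: let $\theta^{(i)}$ be a random vector in $\mathbb R^{\mathcal N}$ with finite second moments and $\theta^{(i)}_{t_i} = 0$; let $S_i$ be uniformly distributed on $\mathcal T \setminus\{t_i\}$; let $\Gamma_i$ be a real random variable with mean $0$ and variance $\sigma_\Gamma^2$; assume $\theta^{(i)}, S_i, \Gamma_i$ mutually independent; and let $\hat\theta^{(i)}$ be the random vector with $\hat\theta^{(i)}_{t_i} = 0$ and $\hat B\hat\theta^{(i)} = \hat B\theta^{(i)} + \Gamma_i u^{S_i,t_i}$. Define $$\omega = \min\{(v^{s,t}_j)^2 : s,t \in \mathcal T,\ s\ne t,\ j \in \mathcal N,\ v^{s,t}_j \neq 0\},\qquad \lambda = \frac{\sigma_\Gamma^2}{|\mathcal T|-1}\,\omega .$$ Then for every bus $k \in \mathcal N$ there exists $i \in \{1,2\}$ such that the $(k,k)$ entry of the covariance matrix of $\hat\theta^{(i)}$ is at least the $(k,k)$ entry of the covariance matrix of $\theta^{(i)}$ plus $\lambda$, i.e. $\operatorname{Var}(\hat\theta^{(i)}_k) \ge \operatorname{Var}(\theta^{(i)}_k) + \lambda$.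
   Context: DC power flow model: each line $km$ has reactance $x_{km} > 0$, and $\hat B_{kk} = \sum_{km \ni k} 1/x_{km}$, $\hat B_{km} = -1/x_{km}$ for a line $km$, $\hat B_{km} = 0$ otherwise. For distinct buses $s,t$, $u^{s,t}_s = 1$, $u^{s,t}_t = -1$, $u^{s,t}_k = 0$ otherwise, and $v^{s,t}$ is the unique vector with $\hat B v^{s,t} = u^{s,t}$ and $v^{s,t}_t = 0$. *)

theory Defs
  imports "HOL-Probability.Probability"
begin

text \<open>Buses are the elements of a finite type 'n.  The network is given by a symmetric,
irreflexive line relation and reactances x (only their values on lines matter).\<close>

definition Bhat :: "('n::finite \<Rightarrow> 'n \<Rightarrow> bool) \<Rightarrow> ('n \<Rightarrow> 'n \<Rightarrow> real) \<Rightarrow> 'n \<Rightarrow> 'n \<Rightarrow> real" where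
  "Bhat line x k m =
     (if k = m then (\<Sum>j\<in>{j. line k j}. 1 / x k j)
      else if line k m then - 1 / x k m else 0)"

definition uvec :: "'n \<Rightarrow> 'n \<Rightarrow> 'n \<Rightarrow> real" where
  "uvec s t k = (if k = s then 1 else if k = t then -1 else 0)"

definition vvec :: "('n::finite \<Rightarrow> 'n \<Rightarrow> bool) \<Rightarrow> ('n \<Rightarrow> 'n \<Rightarrow> real) \<Rightarrow> 'n \<Rightarrow> 'n \<Rightarrow> 'n \<Rightarrow> real" where
  "vvec line x s t = (THE v. (\<forall>k. (\<Sum>m\<in>UNIV. Bhat line x k m * v m) = uvec s t k) \<and> v t = 0)"

definition omega :: "('n::finite \<Rightarrow> 'n \<Rightarrow> bool) \<Rightarrow> ('n \<Rightarrow> 'n \<Rightarrow> real) \<Rightarrow> 'n set \<Rightarrow> real" where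
  "omega line x T = Min {(vvec line x s t j)^2 | s t j. s \<in> T \<and> t \<in> T \<and> s \<noteq> t \<and> vvec line x s t j \<noteq> 0}"

text \<open>Mutual independence of three random variables with (possibly) different codomains,
 following the definition of indep_vars (independence of the generated preimage sigma algebras).\<close>
definition indep3 :: "'a measure \<Rightarrow> ('a \<Rightarrow> 'b) \<Rightarrow> 'b measure \<Rightarrow> ('a \<Rightarrow> 'c) \<Rightarrow> 'c measure
    \<Rightarrow> ('a \<Rightarrow> 'd) \<Rightarrow> 'd measure \<Rightarrow> bool" where
  "indep3 M X MX Y MY Z MZ \<longleftrightarrow>
     X \<in> measurable M MX \<and> Y \<in> measurable M MY \<and> Z \<in> measurable M MZ \<and>
     prob_space.indep_sets M
       (\<lambda>j::nat. if j = 0 then {X -` A \<inter> space M | A. A \<in> sets MX}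
                else if j = 1 then {Y -` A \<inter> space M | A. A \<in> sets MY}
                else {Z -` A \<inter> space M | A. A \<in> sets MZ}) {0, 1, 2}"

end

theory Submission
  imports Defs
begin


definition Bw :: "('n::finite \<Rightarrow> 'n \<Rightarrow> bool) \<Rightarrow> ('n \<Rightarrow> 'n \<Rightarrow> real) \<Rightarrow> ('n \<Rightarrow> real) \<Rightarrow> 'n \<Rightarrow> real" where
  "Bw line x w r = (\<Sum>m\<in>UNIV. Bhat line x r m * w m)"

locale net =
  fixes line :: "'n::finite \<Rightarrow> 'n \<Rightarrow> bool" and x :: "'n \<Rightarrow> 'n \<Rightarrow> real"
  assumes line_sym: "\<And>a b. line a b \<Longrightarrow> line b a"
    and line_irrefl: "\<And>a. \<not> line a a"
    and x_pos: "\<And>a b. line a b \<Longrightarrow> x a b > 0"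
    and x_sym: "\<And>a b. line a b \<Longrightarrow> x a b = x b a"
    and connected: "\<And>a b. (a, b) \<in> {(a, b). line a b}\<^sup>*"
begin

lemma Bw_eq: "Bw line x w r = (\<Sum>j\<in>{j. line r j}. (w r - w j) / x r j)"
proof -
  have "\<And>m. Bhat line x r m * w m = (if m = r then (\<Sum>j\<in>{j. line r j}. 1 / x r j) * w r else 0)
      + (if line r m then - w m / x r m else 0)"
    using line_irrefl by (auto simp: Bhat_def)
  then have "Bw line x w r = (\<Sum>j\<in>{j. line r j}. 1 / x r j) * w r + (\<Sum>m\<in>{j. line r j}. - w m / x r m)"
    unfolding Bw_def by (simp add: sum.distrib sum.inter_filter[symmetric])
  also have "\<dots> = (\<Sum>j\<in>{j. line r j}. (w r - w j) / x r j)"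
    by (simp add: sum_distrib_right sum.distrib[symmetric] diff_divide_distrib)
  finally show ?thesis .
qed

lemma Bw_lin: "Bw line x (\<lambda>m. f m + c * g m) r = Bw line x f r + c * Bw line x g r"
  unfolding Bw_def by (simp add: algebra_simps sum.distrib sum_distrib_left)

lemma Bw_diff: "Bw line x (\<lambda>m. f m - g m) r = Bw line x f r - Bw line x g r"
  unfolding Bw_def by (simp add: algebra_simps sum_subtractf)

lemma Bw_neg: "Bw line x (\<lambda>m. - f m) r = - Bw line x f r"
  unfolding Bw_def by (simp add: sum_negf)

lemma Bw_const: "Bw line x (\<lambda>m. c) r = 0"
  by (simp add: Bw_eq)

lemma Bhat_sym: "Bhat line x r m = Bhat line x m r"
  unfolding Bhat_def using line_sym x_sym by auto

lemma colsum: "(\<Sum>r\<in>UNIV. Bw line x v r) = 0"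
proof -
  have "(\<Sum>r\<in>UNIV. Bw line x v r) = (\<Sum>m\<in>UNIV. v m * (\<Sum>r\<in>UNIV. Bhat line x m r))"
    unfolding Bw_def by (subst sum.swap) (simp add: sum_distrib_left Bhat_sym mult.commute)
  also have "\<dots> = 0"
    using Bw_const[of 1] by (simp add: Bw_def)
  finally show ?thesis .
qed

lemma MP:
  assumes "\<And>r. w r = Max (range w) \<Longrightarrow> Bw line x w r \<le> 0"
  shows "w a = Max (range w)"
proof -
  define Mx where "Mx = Max (range w)"
  have "Mx \<in> range w" unfolding Mx_def by (rule Max_in) auto
  then obtain r0 where r0: "w r0 = Mx" by auto
  have le: "\<And>j. w j \<le> Mx" unfolding Mx_def by (rule Max_ge) auto
  have "(r0, a) \<in> {(a, b). line a b}\<^sup>*" by (rule connected)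
  then show ?thesis unfolding Mx_def[symmetric]
  proof (induction rule: rtrancl_induct)
    case base then show ?case by (rule r0)
  next
    case (step y z)
    have ly: "line y z" using step(2) by simp
    have "Bw line x w y \<le> 0" using assms step(3) unfolding Mx_def by blast
    then have s: "(\<Sum>j\<in>{j. line y j}. (w y - w j) / x y j) \<le> 0" by (simp add: Bw_eq)
    have nn: "\<And>j. j \<in> {j. line y j} \<Longrightarrow> 0 \<le> (w y - w j) / x y j"
      using step(3) le x_pos by (simp add: less_imp_le)
    have "(\<Sum>j\<in>{j. line y j}. (w y - w j) / x y j) = 0"
      using s nn by (meson antisym sum_nonneg)
    then have "\<forall>j\<in>{j. line y j}. (w y - w j) / x y j = 0"
      using nn by (subst sum_nonneg_eq_0_iff[symmetric]) auto
    then have "(w y - w z) / x y z = 0" using ly by auto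
    then show ?case using x_pos[OF ly] step(3) by simp
  qed
qed

lemma MP2:
  assumes "Z \<noteq> {}" "\<And>z. z \<in> Z \<Longrightarrow> w z = 0" "\<And>r. r \<notin> Z \<Longrightarrow> Bw line x w r = 0"
  shows "w a \<le> 0"
proof (cases "Max (range w) \<le> 0")
  case True
  have "w a \<le> Max (range w)" by (rule Max_ge) auto
  then show ?thesis using True by linarith
next
  case False
  have "\<And>r. w r = Max (range w) \<Longrightarrow> Bw line x w r \<le> 0"
    using False assms(2,3) by (metis linorder_not_le order_refl)
  from MP[OF this] obtain z where "z \<in> Z" "w z = Max (range w)" using assms(1) by blast
  then show ?thesis using False assms(2) by simp
qed

lemma uniq0:
  assumes "\<And>r. Bw line x w r = 0" "w t = 0" shows "w a = 0"
proof -
  have "w a \<le> 0" by (rule MP2[of "{t}"]) (use assms in auto)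
  moreover have "- w a \<le> 0" by (rule MP2[of "{t}" "\<lambda>m. - w m"]) (use assms in \<open>auto simp: Bw_neg\<close>)
  ultimately show ?thesis by simp
qed

lemma uniq:
  assumes "\<And>r. Bw line x w1 r = Bw line x w2 r" "w1 t = w2 t" shows "w1 = w2"
proof
  fix a show "w1 a = w2 a"
    using uniq0[of "\<lambda>m. w1 m - w2 m" t a] assms by (simp add: Bw_diff)
qed

lemma exist:
  assumes st: "s \<noteq> t"
  shows "\<exists>v. (\<forall>r. Bw line x v r = uvec s t r) \<and> v t = 0"
proof -
  define L :: "real^'n \<Rightarrow> real^'n" where
    "L w = (\<chi> r. if r = t then w$t else Bw line x (\<lambda>m. w$m) r)" for w
  have lin: "linear L"
    by (rule linearI) (auto simp: L_def vec_eq_iff Bw_def sum.distrib sum_distrib_left algebra_simps)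
  have inj: "inj L"
  proof (rule linear_injective_0[OF lin, THEN iffD2], intro allI impI)
    fix w assume "L w = 0"
    then have h: "\<And>r. (if r = t then w$t else Bw line x (\<lambda>m. w$m) r) = 0"
      by (simp add: L_def vec_eq_iff)
    then have wt: "w$t = 0" by (metis (full_types))
    have nt: "\<And>r. r \<noteq> t \<Longrightarrow> Bw line x (\<lambda>m. w$m) r = 0" using h by metis
    have "(\<Sum>r\<in>UNIV. Bw line x (\<lambda>m. w$m) r) = Bw line x (\<lambda>m. w$m) t + (\<Sum>r\<in>UNIV-{t}. Bw line x (\<lambda>m. w$m) r)"
      by (simp add: sum.remove)
    then have "Bw line x (\<lambda>m. w$m) t = 0" using colsum nt by simp
    then have "\<And>r. Bw line x (\<lambda>m. w$m) r = 0" using nt by metis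
    then show "w = 0" using uniq0[of "\<lambda>m. w$m" t] wt by (simp add: vec_eq_iff)
  qed
  have "surj L" by (rule linear_inj_imp_surj[OF lin inj])
  then obtain w where w: "L w = (\<chi> r. if r = t then 0 else uvec s t r)" by (metis surjD)
  define v where "v = (\<lambda>m. w$m)"
  have h: "(if r = t then v t else Bw line x v r) = (if r = t then 0 else uvec s t r)" for r
  proof -
    have "L w $ r = (\<chi> r. if r = t then 0 else uvec s t r) $ r" using w by simp
    then show ?thesis by (auto simp: L_def v_def split: if_splits)
  qed
  then have vt: "v t = 0" by (metis (full_types))
  have nt: "\<And>r. r \<noteq> t \<Longrightarrow> Bw line x v r = uvec s t r" using h by metis
  have "(\<Sum>r\<in>UNIV. Bw line x v r) = Bw line x v t + (\<Sum>r\<in>UNIV-{t}. Bw line x v r)"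
    by (simp add: sum.remove)
  also have "(\<Sum>r\<in>UNIV-{t}. Bw line x v r) = (\<Sum>r\<in>UNIV-{t}. if r = s then 1 else 0)"
    using nt by (intro sum.cong) (auto simp: uvec_def)
  also have "\<dots> = 1" using st by (simp add: sum.delta)
  finally have "Bw line x v t = -1" using colsum by simp
  then have "\<And>r. Bw line x v r = uvec s t r" using nt by (metis uvec_def st)
  then show ?thesis using vt by blast
qed

lemma vvec_spec:
  assumes "s \<noteq> t"
  shows "(\<forall>r. Bw line x (vvec line x s t) r = uvec s t r) \<and> vvec line x s t t = 0"
proof -
  have "\<exists>!v. (\<forall>r. Bw line x v r = uvec s t r) \<and> v t = 0"
    using exist[OF assms] uniq by metis
  then show ?thesis unfolding vvec_def Bw_def[symmetric] by (rule theI')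
qed

lemma nonzero:
  assumes "t1 \<noteq> t2"
  shows "vvec line x t2 t1 k \<noteq> 0 \<or> vvec line x t1 t2 k \<noteq> 0"
proof (rule ccontr)
  assume "\<not> ?thesis"
  then have z1: "vvec line x t2 t1 k = 0" and z2: "vvec line x t1 t2 k = 0" by auto
  define w where "w = vvec line x t1 t2"
  define c where "c = w t1"
  have ws: "\<And>r. Bw line x w r = uvec t1 t2 r" "w t2 = 0"
    using vvec_spec[of t1 t2] assms unfolding w_def by auto
  have "(\<lambda>m. c - w m) = vvec line x t2 t1"
  proof (rule uniq[where t = t1])
    fix r show "Bw line x (\<lambda>m. c - w m) r = Bw line x (vvec line x t2 t1) r"
      using vvec_spec[of t2 t1] assms ws Bw_diff[of "\<lambda>_. c" w r] Bw_const[of c r]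
      by (auto simp: uvec_def)
  next
    show "c - w t1 = vvec line x t2 t1 t1" using vvec_spec[of t2 t1] assms by (simp add: c_def)
  qed
  then have "c - w k = 0" using z1 by metis
  then have w1: "w t1 = 0" using z2 by (simp add: c_def w_def)
  have a: "\<And>a. w a \<le> 0"
    by (rule MP2[of "{t1,t2}"]) (use ws w1 in \<open>auto simp: uvec_def\<close>)
  have b: "\<And>a. - w a \<le> 0"
    by (rule MP2[of "{t1,t2}"]) (use ws w1 in \<open>auto simp: uvec_def Bw_neg\<close>)
  have "w = (\<lambda>_. 0)" using a b by (intro ext) (meson antisym neg_le_0_iff_le)
  then have "Bw line x w t1 = 0" using Bw_const by simp
  then show False using ws(1)[of t1] by (simp add: uvec_def)
qed

end


lemma (in prob_space) indep3_real:
  fixes \<theta> :: "'a \<Rightarrow> 'n \<Rightarrow> real" and S :: "'a \<Rightarrow> 'n" and \<Gamma> :: "'a \<Rightarrow> real"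
  assumes ind: "indep3 M \<theta> (Pi\<^sub>M UNIV (\<lambda>_. borel)) S (count_space UNIV) \<Gamma> borel"
    and fa[measurable]: "fa \<in> borel_measurable borel" and fc[measurable]: "fc \<in> borel_measurable borel"
  shows "indep_vars (\<lambda>_. borel) (\<lambda>j \<omega>. if j = 0 then fa (\<theta> \<omega> k) else if j = 1 then fb (S \<omega>) else fc (\<Gamma> \<omega>)) {0,1,2::nat}"
proof -
  have m1[measurable]: "\<theta> \<in> measurable M (Pi\<^sub>M UNIV (\<lambda>_. borel))"
    and m2[measurable]: "S \<in> measurable M (count_space UNIV)"
    and m3[measurable]: "\<Gamma> \<in> borel_measurable M"
    using ind by (auto simp: indep3_def)
  have i: "indep_sets (\<lambda>j::nat. if j = 0 then {\<theta> -` A \<inter> space M | A. A \<in> sets (Pi\<^sub>M UNIV (\<lambda>_. borel))}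
                else if j = 1 then {S -` A \<inter> space M | A. A \<in> sets (count_space UNIV)}
                else {\<Gamma> -` A \<inter> space M | A. A \<in> sets borel}) {0, 1, 2}"
    using ind by (simp add: indep3_def)
  have mk: "(\<lambda>\<omega>. \<omega> k) \<in> borel_measurable (Pi\<^sub>M UNIV (\<lambda>_. borel))" by measurable
  show ?thesis
    unfolding indep_vars_def2
  proof (intro conjI ballI)
    fix j :: nat assume "j \<in> {0,1,2}"
    show "random_variable borel (\<lambda>\<omega>. if j = 0 then fa (\<theta> \<omega> k) else if j = 1 then fb (S \<omega>) else fc (\<Gamma> \<omega>))"
    proof -
      have "(\<lambda>\<omega>. \<theta> \<omega> k) \<in> borel_measurable M" using measurable_comp[OF m1 mk] by (simp add: comp_def)
      moreover have "(\<lambda>\<omega>. fb (S \<omega>)) \<in> borel_measurable M"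
      proof -
        have "fb \<in> borel_measurable (count_space UNIV)" by simp
        from measurable_comp[OF m2 this] show ?thesis by (simp add: comp_def)
      qed
      ultimately show ?thesis by auto
    qed
  next
    show "indep_sets (\<lambda>j::nat. {(\<lambda>\<omega>. if j = 0 then fa (\<theta> \<omega> k) else if j = 1 then fb (S \<omega>) else fc (\<Gamma> \<omega>)) -` A \<inter> space M |A. A \<in> sets borel}) {0, 1, 2}"
    proof (rule indep_sets_mono_sets[OF i])
      fix j :: nat assume j: "j \<in> {0,1,2}"
      show "{(\<lambda>\<omega>. if j = 0 then fa (\<theta> \<omega> k) else if j = 1 then fb (S \<omega>) else fc (\<Gamma> \<omega>)) -` A \<inter> space M |A. A \<in> sets borel}
        \<subseteq> (if j = 0 then {\<theta> -` A \<inter> space M | A. A \<in> sets (Pi\<^sub>M UNIV (\<lambda>_. borel))}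
                else if j = 1 then {S -` A \<inter> space M | A. A \<in> sets (count_space UNIV)}
                else {\<Gamma> -` A \<inter> space M | A. A \<in> sets borel})"
      proof (intro subsetI)
        fix E assume "E \<in> {(\<lambda>\<omega>. if j = 0 then fa (\<theta> \<omega> k) else if j = 1 then fb (S \<omega>) else fc (\<Gamma> \<omega>)) -` A \<inter> space M |A. A \<in> sets borel}"
        then obtain A where A: "A \<in> sets borel"
          and E: "E = (\<lambda>\<omega>. if j = 0 then fa (\<theta> \<omega> k) else if j = 1 then fb (S \<omega>) else fc (\<Gamma> \<omega>)) -` A \<inter> space M" by blast
        consider "j = 0" | "j = 1" | "j = 2" using j by auto
        then show "E \<in> (if j = 0 then {\<theta> -` A \<inter> space M | A. A \<in> sets (Pi\<^sub>M UNIV (\<lambda>_. borel))}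
                else if j = 1 then {S -` A \<inter> space M | A. A \<in> sets (count_space UNIV)}
                else {\<Gamma> -` A \<inter> space M | A. A \<in> sets borel})"
        proof cases
          case 1
          define B where "B = (\<lambda>f. fa (f k)) -` A \<inter> space (Pi\<^sub>M UNIV (\<lambda>_::'n. borel :: real measure))"
          have "(\<lambda>f. fa (f k)) \<in> borel_measurable (Pi\<^sub>M UNIV (\<lambda>_::'n. borel :: real measure))"
            using measurable_comp[OF mk fa] by (simp add: comp_def)
          then have "B \<in> sets (Pi\<^sub>M UNIV (\<lambda>_. borel))" unfolding B_def using A by (rule measurable_sets)
          moreover have "E = \<theta> -` B \<inter> space M"
            using 1 E measurable_space[OF m1] by (auto simp: B_def)
          ultimately show ?thesis using 1 by auto
        next
          case 2
          then show ?thesis using E by (auto intro!: exI[of _ "fb -` A"])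
        next
          case 3
          then show ?thesis using E A by (auto intro!: exI[of _ "fc -` A \<inter> space borel"] measurable_sets[OF fc])
        qed
      qed
    qed
  qed
qed

lemma (in prob_space) var_lemma:
  fixes \<theta> \<theta>h :: "'a \<Rightarrow> 'n::finite \<Rightarrow> real" and S :: "'a \<Rightarrow> 'n" and \<Gamma> :: "'a \<Rightarrow> real" and g :: "'n \<Rightarrow> real"
  assumes ind: "indep3 M \<theta> (Pi\<^sub>M UNIV (\<lambda>_. borel)) S (count_space UNIV) \<Gamma> borel"
    and \<theta>_sq: "integrable M (\<lambda>\<omega>. (\<theta> \<omega> k)^2)"
    and \<Gamma>_sq: "integrable M (\<lambda>\<omega>. (\<Gamma> \<omega>)^2)"
    and \<Gamma>_mean: "expectation \<Gamma> = 0"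
    and \<theta>h_meas: "\<theta>h \<in> measurable M (Pi\<^sub>M UNIV (\<lambda>_. borel))"
    and eq: "AE \<omega> in M. \<theta>h \<omega> k = \<theta> \<omega> k + \<Gamma> \<omega> * g (S \<omega>)"
  shows "variance (\<lambda>\<omega>. \<theta>h \<omega> k) = variance (\<lambda>\<omega>. \<theta> \<omega> k)
           + expectation (\<lambda>\<omega>. (\<Gamma> \<omega>)^2) * expectation (\<lambda>\<omega>. (g (S \<omega>))^2)"
proof -
  have m1: "\<theta> \<in> measurable M (Pi\<^sub>M UNIV (\<lambda>_. borel))"
    and m2: "S \<in> measurable M (count_space UNIV)"
    and m3[measurable]: "\<Gamma> \<in> borel_measurable M"
    using ind by (auto simp: indep3_def)
  have mk: "(\<lambda>\<omega>. \<omega> k) \<in> borel_measurable (Pi\<^sub>M UNIV (\<lambda>_::'n. borel :: real measure))" by measurable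
  have mX[measurable]: "(\<lambda>\<omega>. \<theta> \<omega> k) \<in> borel_measurable M"
    using measurable_comp[OF m1 mk] by (simp add: comp_def)
  have mXh[measurable]: "(\<lambda>\<omega>. \<theta>h \<omega> k) \<in> borel_measurable M"
    using measurable_comp[OF \<theta>h_meas mk] by (simp add: comp_def)
  have mG[measurable]: "(\<lambda>\<omega>. g (S \<omega>)) \<in> borel_measurable M"
  proof -
    have "g \<in> borel_measurable (count_space UNIV)" by simp
    from measurable_comp[OF m2 this] show ?thesis by (simp add: comp_def)
  qed
  have intX: "integrable M (\<lambda>\<omega>. \<theta> \<omega> k)" by (rule square_integrable_imp_integrable[OF mX \<theta>_sq])
  have int\<Gamma>: "integrable M \<Gamma>" by (rule square_integrable_imp_integrable[OF m3 \<Gamma>_sq])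
  define C where "C = (\<Sum>s\<in>UNIV. \<bar>g s\<bar>)"
  have gC: "\<bar>g s\<bar> \<le> C" for s unfolding C_def by (rule member_le_sum) auto
  have intG: "integrable M (\<lambda>\<omega>. g (S \<omega>))"
    by (rule integrable_const_bound[where B = C]) (use gC in auto)
  define c where "c = expectation (\<lambda>\<omega>. \<theta> \<omega> k)"
  have IV: "indep_vars (\<lambda>_. borel) (\<lambda>j \<omega>. if j = 0 then (\<theta> \<omega> k - c) else if j = 1 then g (S \<omega>) else \<Gamma> \<omega>) {0,1,2::nat}"
    by (rule indep3_real[OF ind, where fa="\<lambda>z. z - c" and fc="\<lambda>z. z" and fb=g]) auto
  have IV2: "indep_vars (\<lambda>_. borel) (\<lambda>j \<omega>. if j = 0 then (\<theta> \<omega> k) else if j = 1 then (g (S \<omega>))^2 else (\<Gamma> \<omega>)^2) {0,1,2::nat}"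
    by (rule indep3_real[OF ind, where fa="\<lambda>z. z" and fc="\<lambda>z. z^2" and fb="\<lambda>s. (g s)^2"]) auto
  have int0: "\<And>j. j \<in> {0,1,2::nat} \<Longrightarrow> integrable M ((\<lambda>j \<omega>. if j = 0 then (\<theta> \<omega> k - c) else if j = 1 then g (S \<omega>) else \<Gamma> \<omega>) j)"
    using intX intG int\<Gamma> by auto
  have E1: "expectation (\<lambda>\<omega>. g (S \<omega>) * \<Gamma> \<omega>) = 0"
    using indep_vars_lebesgue_integral[OF _ indep_vars_subset[OF IV, of "{1,2}"]] int0 \<Gamma>_mean by simp
  have E2: "expectation (\<lambda>\<omega>. (\<theta> \<omega> k - c) * (g (S \<omega>) * \<Gamma> \<omega>)) = 0"
    using indep_vars_lebesgue_integral[OF _ IV] int0 \<Gamma>_mean by simp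
  have I2: "integrable M (\<lambda>\<omega>. (\<theta> \<omega> k - c) * (g (S \<omega>) * \<Gamma> \<omega>))"
    using indep_vars_integrable[OF _ IV] int0 by simp
  have intG2: "integrable M (\<lambda>\<omega>. (g (S \<omega>))^2)"
  proof (rule integrable_const_bound[where B = "C^2"])
    have C0: "0 \<le> C" unfolding C_def by (rule sum_nonneg) auto
    have "(g s)^2 \<le> C^2" for s using abs_le_square_iff[of "g s" C] gC[of s] C0 by simp
    then show "AE x in M. norm ((g (S x))^2) \<le> C^2" by simp
  qed simp
  have int02: "\<And>j. j \<in> {1,2::nat} \<Longrightarrow> integrable M ((\<lambda>j \<omega>. if j = 0 then (\<theta> \<omega> k) else if j = 1 then (g (S \<omega>))^2 else (\<Gamma> \<omega>)^2) j)"
    using intG2 \<Gamma>_sq by auto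
  have E3: "expectation (\<lambda>\<omega>. (g (S \<omega>))^2 * (\<Gamma> \<omega>)^2) = expectation (\<lambda>\<omega>. (g (S \<omega>))^2) * expectation (\<lambda>\<omega>. (\<Gamma> \<omega>)^2)"
    using indep_vars_lebesgue_integral[OF _ indep_vars_subset[OF IV2, of "{1,2}"] int02] by simp
  have I3: "integrable M (\<lambda>\<omega>. (g (S \<omega>))^2 * (\<Gamma> \<omega>)^2)"
    using indep_vars_integrable[OF _ indep_vars_subset[OF IV2, of "{1,2}"] int02] by simp
  have intGG: "integrable M (\<lambda>\<omega>. \<Gamma> \<omega> * g (S \<omega>))"
    using indep_vars_integrable[OF _ indep_vars_subset[OF IV, of "{1,2}"]] int0 by (simp add: mult.commute)
  have Eh: "expectation (\<lambda>\<omega>. \<theta>h \<omega> k) = c"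
  proof -
    have "expectation (\<lambda>\<omega>. \<theta>h \<omega> k) = expectation (\<lambda>\<omega>. \<theta> \<omega> k + \<Gamma> \<omega> * g (S \<omega>))"
      by (rule integral_cong_AE) (use eq in auto)
    also have "\<dots> = c + expectation (\<lambda>\<omega>. \<Gamma> \<omega> * g (S \<omega>))"
      using intX intGG by (simp add: c_def)
    also have "expectation (\<lambda>\<omega>. \<Gamma> \<omega> * g (S \<omega>)) = 0" using E1 by (simp add: mult.commute)
    finally show ?thesis by simp
  qed
  have intXc: "integrable M (\<lambda>\<omega>. (\<theta> \<omega> k - c)^2)"
  proof -
    have "(\<lambda>\<omega>. (\<theta> \<omega> k - c)^2) = (\<lambda>\<omega>. (\<theta> \<omega> k)^2 - 2 * c * \<theta> \<omega> k + c^2)"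
      by (simp add: fun_eq_iff power2_diff algebra_simps)
    then show ?thesis using \<theta>_sq intX by simp
  qed
  have "variance (\<lambda>\<omega>. \<theta>h \<omega> k) = expectation (\<lambda>\<omega>. (\<theta> \<omega> k - c)^2 + 2 * ((\<theta> \<omega> k - c) * (g (S \<omega>) * \<Gamma> \<omega>))
            + (g (S \<omega>))^2 * (\<Gamma> \<omega>)^2)"
    unfolding Eh
    by (rule integral_cong_AE) (use eq in \<open>auto simp: power2_eq_square algebra_simps\<close>)
  also have "\<dots> = expectation (\<lambda>\<omega>. (\<theta> \<omega> k - c)^2) + 2 * expectation (\<lambda>\<omega>. (\<theta> \<omega> k - c) * (g (S \<omega>) * \<Gamma> \<omega>))
            + expectation (\<lambda>\<omega>. (g (S \<omega>))^2 * (\<Gamma> \<omega>)^2)"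
    using intXc I2 I3 by simp
  also have "\<dots> = variance (\<lambda>\<omega>. \<theta> \<omega> k) + expectation (\<lambda>\<omega>. (\<Gamma> \<omega>)^2) * expectation (\<lambda>\<omega>. (g (S \<omega>))^2)"
    using E2 E3 by (simp add: c_def mult.commute)
  finally show ?thesis .
qed



lemma (in net) single:
  fixes M :: "'a measure" and \<theta> \<theta>h :: "'a \<Rightarrow> 'n \<Rightarrow> real" and S :: "'a \<Rightarrow> 'n" and \<Gamma> :: "'a \<Rightarrow> real"
    and t :: 'n and T :: "'n set"
  assumes P: "prob_space M" and tT: "t \<in> T" and cT: "card T \<ge> 2"
    and \<theta>_sq: "integrable M (\<lambda>\<omega>. (\<theta> \<omega> k)^2)"
    and \<theta>_t: "AE \<omega> in M. \<theta> \<omega> t = 0"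
    and S_unif: "\<And>s. s \<in> T - {t} \<Longrightarrow> measure M {\<omega> \<in> space M. S \<omega> = s} = 1 / real (card T - 1)"
    and \<Gamma>_sq: "integrable M (\<lambda>\<omega>. (\<Gamma> \<omega>)^2)"
    and \<Gamma>_mean: "prob_space.expectation M \<Gamma> = 0"
    and \<Gamma>_var: "prob_space.variance M \<Gamma> = sigma2"
    and ind: "indep3 M \<theta> (Pi\<^sub>M UNIV (\<lambda>_. borel)) S (count_space UNIV) \<Gamma> borel"
    and \<theta>h_meas: "\<theta>h \<in> measurable M (Pi\<^sub>M UNIV (\<lambda>_. borel))"
    and \<theta>h_t: "AE \<omega> in M. \<theta>h \<omega> t = 0"
    and \<theta>h_eq: "AE \<omega> in M. \<forall>r.
        (\<Sum>m\<in>UNIV. Bhat line x r m * \<theta>h \<omega> m)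
          = (\<Sum>m\<in>UNIV. Bhat line x r m * \<theta> \<omega> m) + \<Gamma> \<omega> * uvec (S \<omega>) t r"
  shows "prob_space.variance M (\<lambda>\<omega>. \<theta>h \<omega> k) = prob_space.variance M (\<lambda>\<omega>. \<theta> \<omega> k)
     + sigma2 * (\<Sum>s\<in>T-{t}. (vvec line x s t k)^2) / (real (card T) - 1)"
proof -
  interpret prob_space M by (rule P)
  define A where "A = T - {t}"
  have finA: "finite A" by simp
  have cA: "card A = card T - 1" unfolding A_def using tT by (simp add: card_Diff_singleton)
  have cpos: "real (card T - 1) > 0" using cT by simp
  have cr: "real (card T - 1) = real (card T) - 1" using cT by (simp add: of_nat_diff)
  have m2[measurable]: "S \<in> measurable M (count_space UNIV)" using ind by (simp add: indep3_def)
  have ev: "\<And>s. {\<omega> \<in> space M. S \<omega> = s} \<in> events" by measurable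
  have "measure M {\<omega> \<in> space M. S \<omega> \<in> A} = measure M (\<Union>s\<in>A. {\<omega> \<in> space M. S \<omega> = s})"
    by (rule arg_cong[where f = "measure M"]) auto
  also have "\<dots> = (\<Sum>s\<in>A. measure M {\<omega> \<in> space M. S \<omega> = s})"
    by (rule finite_measure_finite_Union) (use ev in \<open>auto simp: disjoint_family_on_def\<close>)
  also have "\<dots> = (\<Sum>s\<in>A. 1 / real (card T - 1))" using S_unif by (simp add: A_def)
  also have "\<dots> = 1" using cA cpos by simp
  finally have "\<P>(\<omega> in M. S \<omega> \<in> A) = 1" .
  then have SA: "AE \<omega> in M. S \<omega> \<in> A" by (subst (asm) prob_Collect_eq_1) measurable
  have eq: "AE \<omega> in M. \<theta>h \<omega> k = \<theta> \<omega> k + \<Gamma> \<omega> * vvec line x (S \<omega>) t k"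
    using SA \<theta>_t \<theta>h_t \<theta>h_eq
  proof eventually_elim
    case (elim \<omega>)
    have st: "S \<omega> \<noteq> t" using elim(1) by (simp add: A_def)
    have "\<theta>h \<omega> = (\<lambda>m. \<theta> \<omega> m + \<Gamma> \<omega> * vvec line x (S \<omega>) t m)"
    proof (rule uniq[where t = t])
      fix r show "Bw line x (\<theta>h \<omega>) r = Bw line x (\<lambda>m. \<theta> \<omega> m + \<Gamma> \<omega> * vvec line x (S \<omega>) t m) r"
        using elim(4) vvec_spec[OF st] by (simp add: Bw_lin) (simp add: Bw_def)
    next
      show "\<theta>h \<omega> t = \<theta> \<omega> t + \<Gamma> \<omega> * vvec line x (S \<omega>) t t"
        using elim(2,3) vvec_spec[OF st] by simp
    qed
    then show ?case by (rule fun_cong)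
  qed
  have V: "variance (\<lambda>\<omega>. \<theta>h \<omega> k) = variance (\<lambda>\<omega>. \<theta> \<omega> k)
           + expectation (\<lambda>\<omega>. (\<Gamma> \<omega>)^2) * expectation (\<lambda>\<omega>. (vvec line x (S \<omega>) t k)^2)"
    by (rule var_lemma[OF ind \<theta>_sq \<Gamma>_sq \<Gamma>_mean \<theta>h_meas eq])
  have EG: "expectation (\<lambda>\<omega>. (\<Gamma> \<omega>)^2) = sigma2"
    using \<Gamma>_var \<Gamma>_mean by simp
  define g where "g s = (vvec line x s t k)^2" for s
  have mG[measurable]: "(\<lambda>\<omega>. g (S \<omega>)) \<in> borel_measurable M"
  proof -
    have "g \<in> borel_measurable (count_space UNIV)" by simp
    from measurable_comp[OF m2 this] show ?thesis by (simp add: comp_def)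
  qed
  have "expectation (\<lambda>\<omega>. g (S \<omega>)) = expectation (\<lambda>\<omega>. \<Sum>s\<in>A. g s * indicator {\<omega> \<in> space M. S \<omega> = s} \<omega>)"
  proof (rule integral_cong_AE)
    show "AE \<omega> in M. g (S \<omega>) = (\<Sum>s\<in>A. g s * indicator {\<omega> \<in> space M. S \<omega> = s} \<omega>)"
      using SA AE_space
    proof eventually_elim
      case (elim \<omega>)
      have "(\<Sum>s\<in>A. g s * indicator {\<omega> \<in> space M. S \<omega> = s} \<omega>) = (\<Sum>s\<in>A. if s = S \<omega> then g s else 0)"
        using elim(2) by (intro sum.cong) (auto simp: indicator_def)
      also have "\<dots> = g (S \<omega>)" using elim(1) finA by (simp add: sum.delta')
      finally show ?case by simp
    qed
  qed (use ev in auto)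
  also have "\<dots> = (\<Sum>s\<in>A. expectation (\<lambda>\<omega>. g s * indicator {\<omega> \<in> space M. S \<omega> = s} \<omega>))"
    by (rule Bochner_Integration.integral_sum[where f = "\<lambda>s \<omega>. g s * indicator {\<omega> \<in> space M. S \<omega> = s} \<omega>"])
       (use ev in \<open>auto intro!: integrable_mult_right simp: emeasure_eq_measure\<close>)
  also have "\<dots> = (\<Sum>s\<in>A. g s * measure M {\<omega> \<in> space M. S \<omega> = s})"
    by (intro sum.cong refl) (simp add: Int_absorb2 subset_iff)
  also have "\<dots> = (\<Sum>s\<in>A. g s) / real (card T - 1)"
    using S_unif by (simp add: A_def sum_divide_distrib)
  finally have EG2: "expectation (\<lambda>\<omega>. (vvec line x (S \<omega>) t k)^2) = (\<Sum>s\<in>A. g s) / real (card T - 1)"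
    by (simp add: g_def)
  show ?thesis using V EG EG2 cr by (simp add: A_def g_def)
qed

theorem lemma9:
  fixes line :: "'n::finite \<Rightarrow> 'n \<Rightarrow> bool"
    and x :: "'n \<Rightarrow> 'n \<Rightarrow> real"
    and T :: "'n set" and t :: "nat \<Rightarrow> 'n" and sigma2 :: real
    and M :: "nat \<Rightarrow> 'a measure"
    and \<theta> \<theta>hat :: "nat \<Rightarrow> 'a \<Rightarrow> 'n \<Rightarrow> real"
    and S :: "nat \<Rightarrow> 'a \<Rightarrow> 'n" and \<Gamma> :: "nat \<Rightarrow> 'a \<Rightarrow> real"
    and k :: 'n
  assumes line_sym: "\<And>a b. line a b \<Longrightarrow> line b a"
    and line_irrefl: "\<And>a. \<not> line a a"
    and x_pos: "\<And>a b. line a b \<Longrightarrow> x a b > 0"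
    and x_sym: "\<And>a b. line a b \<Longrightarrow> x a b = x b a"
    and connected: "\<And>a b. (a, b) \<in> {(a, b). line a b}\<^sup>*"
    and t_in: "t 1 \<in> T" "t 2 \<in> T" and t_ne: "t 1 \<noteq> t 2"
    and sigma_pos: "sigma2 > 0"
    and prob: "\<And>i. i \<in> {1, 2} \<Longrightarrow> prob_space (M i)"
    and \<theta>_sq: "\<And>i j. i \<in> {1, 2} \<Longrightarrow> integrable (M i) (\<lambda>\<omega>. (\<theta> i \<omega> j)^2)"
    and \<theta>_t: "\<And>i. i \<in> {1, 2} \<Longrightarrow> AE \<omega> in M i. \<theta> i \<omega> (t i) = 0"
    and S_meas: "\<And>i. i \<in> {1, 2} \<Longrightarrow> S i \<in> measurable (M i) (count_space UNIV)"
    and S_unif: "\<And>i s. i \<in> {1, 2} \<Longrightarrow> s \<in> T - {t i} \<Longrightarrow>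
        measure (M i) {\<omega> \<in> space (M i). S i \<omega> = s} = 1 / real (card T - 1)"
    and \<Gamma>_meas: "\<And>i. i \<in> {1, 2} \<Longrightarrow> \<Gamma> i \<in> borel_measurable (M i)"
    and \<Gamma>_sq: "\<And>i. i \<in> {1, 2} \<Longrightarrow> integrable (M i) (\<lambda>\<omega>. (\<Gamma> i \<omega>)^2)"
    and \<Gamma>_mean: "\<And>i. i \<in> {1, 2} \<Longrightarrow> prob_space.expectation (M i) (\<Gamma> i) = 0"
    and \<Gamma>_var: "\<And>i. i \<in> {1, 2} \<Longrightarrow> prob_space.variance (M i) (\<Gamma> i) = sigma2"
    and indep: "\<And>i. i \<in> {1, 2} \<Longrightarrow>
        indep3 (M i) (\<theta> i) (Pi\<^sub>M UNIV (\<lambda>_. borel)) (S i) (count_space UNIV) (\<Gamma> i) borel"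
    and \<theta>hat_meas: "\<And>i. i \<in> {1, 2} \<Longrightarrow> \<theta>hat i \<in> measurable (M i) (Pi\<^sub>M UNIV (\<lambda>_. borel))"
    and \<theta>hat_t: "\<And>i. i \<in> {1, 2} \<Longrightarrow> AE \<omega> in M i. \<theta>hat i \<omega> (t i) = 0"
    and \<theta>hat_eq: "\<And>i. i \<in> {1, 2} \<Longrightarrow> AE \<omega> in M i. \<forall>r.
        (\<Sum>m\<in>UNIV. Bhat line x r m * \<theta>hat i \<omega> m)
          = (\<Sum>m\<in>UNIV. Bhat line x r m * \<theta> i \<omega> m) + \<Gamma> i \<omega> * uvec (S i \<omega>) (t i) r"
  shows "\<exists>i\<in>{1, 2}. prob_space.variance (M i) (\<lambda>\<omega>. \<theta>hat i \<omega> k)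
           \<ge> prob_space.variance (M i) (\<lambda>\<omega>. \<theta> i \<omega> k)
             + sigma2 / (real (card T) - 1) * omega line x T"
  proof -
  interpret net line x
    apply unfold_locales
    using line_sym line_irrefl x_pos x_sym connected by auto
  have "card {t 1, t 2} = 2" using t_ne by simp
  moreover have "card {t 1, t 2} \<le> card T" by (rule card_mono) (use t_in in auto)
  ultimately have cT: "card T \<ge> 2" by simp
  have fin_om: "finite {(vvec line x s t j)^2 | s t j. s \<in> T \<and> t \<in> T \<and> s \<noteq> t \<and> vvec line x s t j \<noteq> 0}"
  proof (rule finite_subset[of _ "(\<lambda>(s, t, j). (vvec line x s t j)^2) ` UNIV"])
    show "{(vvec line x s t j)^2 | s t j. s \<in> T \<and> t \<in> T \<and> s \<noteq> t \<and> vvec line x s t j \<noteq> 0}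
       \<subseteq> (\<lambda>(s, t, j). (vvec line x s t j)^2) ` UNIV"
    proof
      fix y assume "y \<in> {(vvec line x s t j)^2 | s t j. s \<in> T \<and> t \<in> T \<and> s \<noteq> t \<and> vvec line x s t j \<noteq> 0}"
      then obtain s t j where "y = (vvec line x s t j)^2" by blast
      then show "y \<in> (\<lambda>(s, t, j). (vvec line x s t j)^2) ` UNIV"
        by (intro image_eqI[where x = "(s, t, j)"]) auto
    qed
  qed simp
  have fin: "\<exists>i\<in>{1, 2}. prob_space.variance (M i) (\<lambda>\<omega>. \<theta>hat i \<omega> k)
           \<ge> prob_space.variance (M i) (\<lambda>\<omega>. \<theta> i \<omega> k)
             + sigma2 / (real (card T) - 1) * omega line x T"
    if i: "i \<in> {1, 2}" and s: "s \<in> T - {t i}" and nz: "vvec line x s (t i) k \<noteq> 0" for i s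
  proof -
    have tT: "t i \<in> T" using i t_in by auto
    have V: "prob_space.variance (M i) (\<lambda>\<omega>. \<theta>hat i \<omega> k) = prob_space.variance (M i) (\<lambda>\<omega>. \<theta> i \<omega> k)
     + sigma2 * (\<Sum>s\<in>T-{t i}. (vvec line x s (t i) k)^2) / (real (card T) - 1)"
      by (rule single[OF prob[OF i] tT cT \<theta>_sq[OF i] \<theta>_t[OF i] S_unif[OF i] \<Gamma>_sq[OF i] \<Gamma>_mean[OF i]
            \<Gamma>_var[OF i] indep[OF i] \<theta>hat_meas[OF i] \<theta>hat_t[OF i] \<theta>hat_eq[OF i]])
    have "omega line x T \<le> (vvec line x s (t i) k)^2"
      unfolding omega_def by (rule Min_le[OF fin_om]) (use s tT nz in blast)
    also have "\<dots> \<le> (\<Sum>s\<in>T-{t i}. (vvec line x s (t i) k)^2)"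
      by (rule member_le_sum) (use s in auto)
    finally have le: "omega line x T \<le> (\<Sum>s\<in>T-{t i}. (vvec line x s (t i) k)^2)" .
    have cpos: "real (card T) - 1 > 0" using cT by simp
    have "sigma2 / (real (card T) - 1) * omega line x T
        \<le> sigma2 / (real (card T) - 1) * (\<Sum>s\<in>T-{t i}. (vvec line x s (t i) k)^2)"
      by (rule mult_left_mono[OF le]) (use cpos sigma_pos in simp)
    also have "\<dots> = sigma2 * (\<Sum>s\<in>T-{t i}. (vvec line x s (t i) k)^2) / (real (card T) - 1)"
      by simp
    finally show ?thesis using V i by auto
  qed
  from nonzero[OF t_ne, of k] show ?thesis
  proof
    assume "vvec line x (t 2) (t 1) k \<noteq> 0"
    then show ?thesis using fin[of 1 "t 2"] t_in t_ne by auto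
  next
    assume "vvec line x (t 1) (t 2) k \<noteq> 0"
    then show ?thesis using fin[of 2 "t 1"] t_in t_ne by auto
  qed
qed

end
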